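(* Let $K$ be a positive definite kernel on $\Omega\subset\mathbb{R}^d$, let $\lambda>0$, let $x_1,\dots,x_n\in\Omega$ be pairwise distinct, $X_k:=\{x_1,\dots,x_k\}$ for $0\le k\le n$, and let $f\in\mathcal{H}_\lambda$. With the functions $v_k^\lambda,v_k$ ($1\le k\le n$) defined in the context, it holds $$s_n^\lambda(f)=\sum_{k=1}^n (f,v_k^\lambda)_{\mathcal{H}_\lambda}\,v_k=s_{n-1}^\lambda(f)+(f,v_n^\lambda)_{\mathcal{H}_\lambda}\,v_n .$$ Moreover, if $f\in\mathcal{H}$, then $(f,v_k)_{\mathcal{H}}=(f,v_k^\lambda)_{\mathcal{H}_\lambda}$ for $1\le k\le n$, and therefore $$s_n^\lambda(f)=\sum_{k=1}^n (f,v_k)_{\mathcal{H}}\,v_k=s_{n-1}^\lambda(f)+(f,v_n)_{\mathcal{H}}\,v_n .$$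
   Context: A kernel $K:\Omega\times\Omega\to\mathbb{R}$ is positive definite if it is symmetric and all kernel matrices $(K(x_i,x_j))_{i,j}$ on pairwise distinct points are positive semidefinite (strictly positive definite: positive definite). $\mathcal{H}=\mathcal{H}_K(\Omega)$ is the native space (reproducing kernel Hilbert space) of $K$. Let $\delta(x,y)=1$ if $x=y$ and $0$ otherwise, $K_\lambda(x,y):=K(x,y)+\lambda\delta(x,y)$ (a strictly positive definite kernel for $\lambda>0$), and $\mathcal{H}_\lambda$ its native space. For pairwise distinct points $Y=\{y_1,\dots,y_m\}\subset\Omega$ with kernel matrix $A=(K(y_i,y_j))_{i,j}$ and a function $f:\Omega\to\mathbb{R}$, the regularized interpolant is $s^\lambda(f,Y):=\sum_{j=1}^m\alpha_jK(\cdot,y_j)$ with $(A+\lambda I)\alpha=(f(y_1),\dots,f(y_m))^T$; write $s_k^\lambda(f):=s^\lambda(f,X_k)$, with $s_0^\lambda(f):=0$. Let $A_n=(K(x_i,x_j))_{i,j=1}^n$, let $A_n+\lambda I=LL^T$ be the Cholesky factorization ($L$ lower triangular with positive diagonal), and $(\beta_{jk})_{j,k=1}^n:=L^{-T}$. Define $v_k^\lambda:=\sum_{j=1}^n\beta_{jk}K_\lambda(\cdot,x_j)$ (the Newton basis of $X_n$ in $\mathcal{H}_\lambda$) and $v_k:=\sum_{j=1}^n\beta_{jk}K(\cdot,x_j)$. *)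

theory Defs
  imports "HOL-Analysis.Analysis"
begin

definition pos_def_kernel :: "'a set \<Rightarrow> ('a \<Rightarrow> 'a \<Rightarrow> real) \<Rightarrow> bool" where
  "pos_def_kernel \<Omega> K \<longleftrightarrow>
     (\<forall>x\<in>\<Omega>. \<forall>y\<in>\<Omega>. K x y = K y x) \<and>
     (\<forall>(m::nat) (p::nat \<Rightarrow> 'a) (c::nat \<Rightarrow> real).
        inj_on p {..<m} \<and> p ` {..<m} \<subseteq> \<Omega> \<longrightarrow>
        0 \<le> (\<Sum>i<m. \<Sum>j<m. c i * c j * K (p i) (p j)))"

definition Klam :: "('a \<Rightarrow> 'a \<Rightarrow> real) \<Rightarrow> real \<Rightarrow> 'a \<Rightarrow> 'a \<Rightarrow> real" where
  "Klam K lam x y = K x y + (if x = y then lam else 0)"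

text \<open>Finite kernel combinations (elements of the pre-Hilbert space H_0):
  a finite centre set S and coefficients c.\<close>
type_synonym 'a combo = "'a set \<times> ('a \<Rightarrow> real)"

definition combo_fun :: "('a \<Rightarrow> 'a \<Rightarrow> real) \<Rightarrow> 'a combo \<Rightarrow> 'a \<Rightarrow> real" where
  "combo_fun K a = (\<lambda>z. \<Sum>y\<in>fst a. snd a y * K z y)"

definition pre_inner :: "('a \<Rightarrow> 'a \<Rightarrow> real) \<Rightarrow> 'a combo \<Rightarrow> 'a combo \<Rightarrow> real" where
  "pre_inner K a b = (\<Sum>y\<in>fst a. \<Sum>z\<in>fst b. snd a y * snd b z * K y z)"

definition pre_dist2 :: "('a \<Rightarrow> 'a \<Rightarrow> real) \<Rightarrow> 'a combo \<Rightarrow> 'a combo \<Rightarrow> real" where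
  "pre_dist2 K a b = pre_inner K a a - 2 * pre_inner K a b + pre_inner K b b"

definition represents :: "'a set \<Rightarrow> ('a \<Rightarrow> 'a \<Rightarrow> real) \<Rightarrow> (nat \<Rightarrow> 'a combo) \<Rightarrow> ('a \<Rightarrow> real) \<Rightarrow> bool" where
  "represents \<Omega> K s f \<longleftrightarrow>
     (\<forall>n. finite (fst (s n)) \<and> fst (s n) \<subseteq> \<Omega>) \<and>
     (\<forall>e>0. \<exists>N. \<forall>m\<ge>N. \<forall>n\<ge>N. pre_dist2 K (s m) (s n) < e) \<and>
     (\<forall>x\<in>\<Omega>. (\<lambda>n. combo_fun K (s n) x) \<longlonglongrightarrow> f x)"

text \<open>Native space (RKHS) of K on \<Omega>: the completion of H_0, realised as
  functions on \<Omega>.\<close>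
definition native_space :: "'a set \<Rightarrow> ('a \<Rightarrow> 'a \<Rightarrow> real) \<Rightarrow> ('a \<Rightarrow> real) set" where
  "native_space \<Omega> K = {f. \<exists>s. represents \<Omega> K s f}"

definition native_inner :: "'a set \<Rightarrow> ('a \<Rightarrow> 'a \<Rightarrow> real) \<Rightarrow> ('a \<Rightarrow> real) \<Rightarrow> ('a \<Rightarrow> real) \<Rightarrow> real" where
  "native_inner \<Omega> K f g = (THE r. \<forall>s t. represents \<Omega> K s f \<and> represents \<Omega> K t g \<longrightarrow>
        (\<lambda>n. pre_inner K (s n) (t n)) \<longlonglongrightarrow> r)"

text \<open>Regularized interpolant on X_k = {x_1,...,x_k}:
  sum_j alpha_j K(.,x_j) with (A + lam I) alpha = f|X_k.  For k = 0 this is 0.\<close>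
definition reg_interp :: "('a \<Rightarrow> 'a \<Rightarrow> real) \<Rightarrow> real \<Rightarrow> (nat \<Rightarrow> 'a) \<Rightarrow> nat \<Rightarrow> ('a \<Rightarrow> real) \<Rightarrow> 'a \<Rightarrow> real" where
  "reg_interp K lam x k f =
     (let \<alpha> = (THE \<alpha>::nat \<Rightarrow> real. (\<forall>i. i \<notin> {1..k} \<longrightarrow> \<alpha> i = 0) \<and>
                  (\<forall>i\<in>{1..k}. (\<Sum>j=1..k. (K (x i) (x j) + (if i = j then lam else 0)) * \<alpha> j) = f (x i)))
      in (\<lambda>z. \<Sum>j=1..k. \<alpha> j * K z (x j)))"

end

theory Submission
  imports Defs
begin


definition cf :: "'a combo \<Rightarrow> 'a \<Rightarrow> real" where
  "cf a y = (if y \<in> fst a then snd a y else 0)"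

definition Bk :: "('a \<Rightarrow> 'a \<Rightarrow> real) \<Rightarrow> 'a set \<Rightarrow> ('a \<Rightarrow> real) \<Rightarrow> ('a \<Rightarrow> real) \<Rightarrow> real" where
  "Bk k U p q = (\<Sum>y\<in>U. \<Sum>z\<in>U. p y * q z * k y z)"

lemma cf_out: "y \<notin> fst a \<Longrightarrow> cf a y = 0" by (simp add: cf_def)

lemma sum_supp:
  assumes "finite U" "S \<subseteq> U" "\<And>y. y \<notin> S \<Longrightarrow> g y = 0"
  shows "(\<Sum>y\<in>U. g y) = (\<Sum>y\<in>S. g y)"
  using assms by (intro sum.mono_neutral_right) auto

lemma Bk_supp:
  assumes "finite U" "S \<subseteq> U" "\<And>y. y \<notin> S \<Longrightarrow> p y = 0" "\<And>y. y \<notin> S \<Longrightarrow> q y = 0"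
  shows "Bk k U p q = Bk k S p q"
proof -
  have "Bk k U p q = (\<Sum>y\<in>S. \<Sum>z\<in>U. p y * q z * k y z)"
    unfolding Bk_def by (rule sum_supp) (auto simp: assms)
  also have "\<dots> = Bk k S p q"
    unfolding Bk_def by (intro sum.cong refl sum_supp) (auto simp: assms)
  finally show ?thesis .
qed

lemma pre_inner_Bk:
  assumes "finite U" "fst a \<subseteq> U" "fst b \<subseteq> U"
  shows "pre_inner k a b = Bk k U (cf a) (cf b)"
proof -
  have "Bk k U (cf a) (cf b) = (\<Sum>y\<in>fst a. \<Sum>z\<in>U. cf a y * cf b z * k y z)"
    unfolding Bk_def by (rule sum_supp) (auto simp: assms cf_out)
  also have "\<dots> = (\<Sum>y\<in>fst a. \<Sum>z\<in>fst b. cf a y * cf b z * k y z)"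
    by (intro sum.cong refl sum_supp) (auto simp: assms cf_out)
  also have "\<dots> = pre_inner k a b"
    unfolding pre_inner_def by (intro sum.cong refl) (auto simp: cf_def)
  finally show ?thesis by simp
qed

lemma combo_fun_U:
  assumes "finite U" "fst a \<subseteq> U"
  shows "combo_fun k a z = (\<Sum>y\<in>U. cf a y * k z y)"
proof -
  have "(\<Sum>y\<in>U. cf a y * k z y) = (\<Sum>y\<in>fst a. cf a y * k z y)"
    by (rule sum_supp) (auto simp: assms cf_out)
  also have "\<dots> = combo_fun k a z"
    unfolding combo_fun_def by (intro sum.cong refl) (auto simp: cf_def)
  finally show ?thesis by simp
qed

lemma Bk_diff_left: "Bk k U (\<lambda>y. p y - q y) r = Bk k U p r - Bk k U q r"
  unfolding Bk_def by (simp add: left_diff_distrib sum_subtractf)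
lemma Bk_diff_right: "Bk k U p (\<lambda>y. q y - r y) = Bk k U p q - Bk k U p r"
  unfolding Bk_def by (simp add: right_diff_distrib left_diff_distrib sum_subtractf)
lemma Bk_add_left: "Bk k U (\<lambda>y. p y + q y) r = Bk k U p r + Bk k U q r"
  unfolding Bk_def by (simp add: distrib_right sum.distrib)
lemma Bk_add_right: "Bk k U p (\<lambda>y. q y + r y) = Bk k U p q + Bk k U p r"
  unfolding Bk_def by (simp add: distrib_left distrib_right sum.distrib)
lemma Bk_scale_left: "Bk k U (\<lambda>y. c * p y) q = c * Bk k U p q"
  unfolding Bk_def by (simp add: sum_distrib_left mult.assoc)
lemma Bk_scale_right: "Bk k U p (\<lambda>y. c * q y) = c * Bk k U p q"
  unfolding Bk_def by (simp add: sum_distrib_left mult_ac)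

lemma pdk_sym: "pos_def_kernel \<Omega> k \<Longrightarrow> x \<in> \<Omega> \<Longrightarrow> y \<in> \<Omega> \<Longrightarrow> k x y = k y x"
  unfolding pos_def_kernel_def by blast

lemma Bk_sym:
  assumes k: "pos_def_kernel \<Omega> k" and U: "U \<subseteq> \<Omega>"
  shows "Bk k U p q = Bk k U q p"
proof -
  have "Bk k U q p = (\<Sum>z\<in>U. \<Sum>y\<in>U. q y * p z * k y z)"
    unfolding Bk_def by (rule sum.swap)
  also have "\<dots> = Bk k U p q"
    unfolding Bk_def using U pdk_sym[OF k]
    by (intro sum.cong refl) (auto simp: mult_ac subset_iff)
  finally show ?thesis by simp
qed

lemma Bk_pair:
  assumes k: "pos_def_kernel \<Omega> k" and U: "U \<subseteq> \<Omega>"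
  shows "Bk k U p q = (\<Sum>z\<in>U. q z * (\<Sum>y\<in>U. p y * k z y))"
proof -
  have "Bk k U p q = (\<Sum>z\<in>U. \<Sum>y\<in>U. p y * q z * k y z)"
    unfolding Bk_def by (rule sum.swap)
  also have "\<dots> = (\<Sum>z\<in>U. q z * (\<Sum>y\<in>U. p y * k z y))"
    unfolding sum_distrib_left using U pdk_sym[OF k]
    by (intro sum.cong refl) (auto simp: mult_ac subset_iff)
  finally show ?thesis .
qed

lemma Bk_nonneg:
  assumes k: "pos_def_kernel \<Omega> k" and U: "finite U" "U \<subseteq> \<Omega>"
  shows "0 \<le> Bk k U c c"
proof -
  obtain h where h: "bij_betw h {0..<card U} U" using ex_bij_betw_nat_finite[OF U(1)] by blast
  have inj: "inj_on h {..<card U}" and im: "h ` {..<card U} \<subseteq> \<Omega>"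
    using h U(2) by (auto simp: bij_betw_def atLeast0LessThan)
  have "Bk k U c c = (\<Sum>i\<in>{0..<card U}. \<Sum>j\<in>{0..<card U}. c (h i) * c (h j) * k (h i) (h j))"
    unfolding Bk_def
    by (simp add: sum.reindex_bij_betw[OF h, symmetric])
  also have "\<dots> \<ge> 0"
    using k inj im unfolding pos_def_kernel_def atLeast0LessThan
    by (auto dest!: spec[of _ "card U"] spec[of _ h] spec[of _ "\<lambda>i. c (h i)"])
  finally show ?thesis .
qed

lemma discr:
  fixes a b c :: real
  assumes "a \<ge> 0" "\<And>t. 0 \<le> c + 2*t*b + t^2*a"
  shows "b^2 \<le> a*c"
proof (cases "a > 0")
  case True
  have "0 \<le> c + 2*(-b/a)*b + (-b/a)^2*a" by (rule assms(2))
  also have "\<dots> = c - b^2/a" using True by (simp add: field_simps power2_eq_square)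
  finally have "b^2/a \<le> c" by simp
  then show ?thesis using True by (simp add: field_simps)
next
  case False
  then have a: "a = 0" using assms(1) by simp
  show ?thesis
  proof (cases "b = 0")
    case False
    have "0 \<le> c + 2*(-(c+1)/(2*b))*b + (-(c+1)/(2*b))^2*a" by (rule assms(2))
    also have "\<dots> = -1" using False a by (simp add: field_simps)
    finally show ?thesis by simp
  qed (simp add: a)
qed

lemma Bk_CS:
  assumes k: "pos_def_kernel \<Omega> k" and U: "finite U" "U \<subseteq> \<Omega>"
  shows "(Bk k U p q)^2 \<le> Bk k U q q * Bk k U p p"
proof (rule discr)
  show "0 \<le> Bk k U q q" by (rule Bk_nonneg[OF k U])
  fix t :: real
  have "0 \<le> Bk k U (\<lambda>y. p y + t * q y) (\<lambda>y. p y + t * q y)" by (rule Bk_nonneg[OF k U])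
  also have "\<dots> = Bk k U p p + t * Bk k U p q + t * Bk k U q p + t * (t * Bk k U q q)"
    by (simp add: Bk_add_left Bk_add_right Bk_scale_left Bk_scale_right)
  also have "\<dots> = Bk k U p p + 2*t*Bk k U p q + t^2 * Bk k U q q"
    using Bk_sym[OF k U(2), of q p] by (simp add: power2_eq_square algebra_simps)
  finally show "0 \<le> Bk k U p p + 2*t*Bk k U p q + t^2 * Bk k U q q" .
qed

lemma pre_dist2_Bk:
  assumes k: "pos_def_kernel \<Omega> k" and U: "finite U" "U \<subseteq> \<Omega>" "fst a \<subseteq> U" "fst b \<subseteq> U"
  shows "pre_dist2 k a b = Bk k U (\<lambda>y. cf a y - cf b y) (\<lambda>y. cf a y - cf b y)"
  unfolding pre_dist2_def using Bk_sym[OF k U(2), of "cf a" "cf b"]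
  by (simp add: pre_inner_Bk[OF U(1,3,3)] pre_inner_Bk[OF U(1,3,4)] pre_inner_Bk[OF U(1,4,4)]
      Bk_diff_left Bk_diff_right)

lemma Bk_2bound:
  assumes k: "pos_def_kernel \<Omega> k" and U: "finite U" "U \<subseteq> \<Omega>"
  shows "Bk k U a a \<le> 2 * Bk k U b b + 2 * Bk k U (\<lambda>y. a y - b y) (\<lambda>y. a y - b y)"
proof -
  have "0 \<le> Bk k U (\<lambda>y. a y - 2 * b y) (\<lambda>y. a y - 2 * b y)" by (rule Bk_nonneg[OF k U])
  also have "\<dots> = 2 * Bk k U b b + 2 * Bk k U (\<lambda>y. a y - b y) (\<lambda>y. a y - b y) - Bk k U a a"
    by (simp only: Bk_diff_left Bk_diff_right Bk_scale_left Bk_scale_right) (simp add: algebra_simps)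
  finally show ?thesis by simp
qed



lemma real_final:
  fixes Q t1 t2 d e :: real
  assumes "0 \<le> Q" "Q = t1 + t2" "t1^2 \<le> d * Q" "0 \<le> d" "d < e/8" "\<bar>t2\<bar> < e/4" "e > 0"
  shows "Q < e"
proof (rule ccontr)
  assume "\<not> Q < e"
  then have Qe: "Q \<ge> e" by simp
  have t1: "t1 \<ge> 3*Q/4" using assms Qe by linarith
  have "(3*Q/4)^2 \<le> t1^2" using t1 assms Qe by (intro power_mono) auto
  also have "\<dots> \<le> d * Q" by fact
  also have "\<dots> \<le> (e/8) * Q" using assms by (intro mult_right_mono) auto
  also have "\<dots> \<le> (Q/8) * Q" using Qe assms by (intro mult_right_mono) auto
  finally have "9 * Q^2 \<le> 2 * Q^2" by (simp add: power2_eq_square field_simps)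
  moreover have "Q^2 > 0" using Qe assms by simp
  ultimately show False by simp
qed

lemma hard:
  assumes k: "pos_def_kernel \<Omega> k"
    and S: "\<And>m. finite (S m)" "\<And>m. S m \<subseteq> \<Omega>" "\<And>m y. y \<notin> S m \<Longrightarrow> p m y = 0"
    and cauchy: "\<And>e. e > 0 \<Longrightarrow> \<exists>N. \<forall>m\<ge>N. \<forall>l\<ge>N.
        Bk k (S m \<union> S l) (\<lambda>y. p m y - p l y) (\<lambda>y. p m y - p l y) < e"
    and pw: "\<And>z. z \<in> \<Omega> \<Longrightarrow> (\<lambda>m. \<Sum>y\<in>S m. p m y * k z y) \<longlonglongrightarrow> 0"
  shows "(\<lambda>m. Bk k (S m) (p m) (p m)) \<longlonglongrightarrow> 0"
proof (rule LIMSEQ_I)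
  fix e :: real assume e: "e > 0"
  then have "e/8 > 0" by simp
  from cauchy[OF this] obtain N where N: "\<And>m l. m \<ge> N \<Longrightarrow> l \<ge> N \<Longrightarrow>
      Bk k (S m \<union> S l) (\<lambda>y. p m y - p l y) (\<lambda>y. p m y - p l y) < e/8" by blast
  define F where "F m z = (\<Sum>y\<in>S m. p m y * k z y)" for m z
  have "(\<lambda>m. \<Sum>z\<in>S N. p N z * F m z) \<longlonglongrightarrow> (\<Sum>z\<in>S N. p N z * 0)"
    unfolding F_def using S(2) by (intro tendsto_intros pw) auto
  then have "(\<lambda>m. \<Sum>z\<in>S N. p N z * F m z) \<longlonglongrightarrow> 0" by simp
  moreover have "e/4 > 0" using e by simp
  ultimately obtain M where M0: "\<forall>m\<ge>M. norm ((\<Sum>z\<in>S N. p N z * F m z) - 0) < e/4"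
    using LIMSEQ_D by blast
  then have M: "\<And>m. m \<ge> M \<Longrightarrow> \<bar>\<Sum>z\<in>S N. p N z * F m z\<bar> < e/4" by simp
  show "\<exists>no. \<forall>m\<ge>no. norm (Bk k (S m) (p m) (p m) - 0) < e"
  proof (intro exI allI impI)
    fix m assume m: "max N M \<le> m"
    define U where "U = S m \<union> S N"
    have U: "finite U" "U \<subseteq> \<Omega>" using S unfolding U_def by auto
    have Q: "Bk k (S m) (p m) (p m) = Bk k U (p m) (p m)"
      using S by (intro Bk_supp[symmetric]) (auto simp: U_def)
    have split: "Bk k U (p m) (p m) = Bk k U (p m) (\<lambda>y. p m y - p N y) + Bk k U (p m) (p N)"
      by (simp add: Bk_diff_right)
    have "Bk k U (p m) (p N) = (\<Sum>z\<in>U. p N z * (\<Sum>y\<in>U. p m y * k z y))"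
      by (rule Bk_pair[OF k U(2)])
    also have "\<dots> = (\<Sum>z\<in>U. p N z * F m z)"
      unfolding F_def using S U by (intro sum.cong refl arg_cong2[where f="(*)"] sum_supp) (auto simp: U_def)
    also have "\<dots> = (\<Sum>z\<in>S N. p N z * F m z)"
      using S U by (intro sum_supp) (auto simp: U_def)
    finally have t2: "Bk k U (p m) (p N) = (\<Sum>z\<in>S N. p N z * F m z)" .
    have t1: "(Bk k U (p m) (\<lambda>y. p m y - p N y))^2 \<le>
        Bk k U (\<lambda>y. p m y - p N y) (\<lambda>y. p m y - p N y) * Bk k U (p m) (p m)"
      by (rule Bk_CS[OF k U])
    have d: "Bk k U (\<lambda>y. p m y - p N y) (\<lambda>y. p m y - p N y) < e/8"
      using N[of m N] m unfolding U_def by auto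
    have d0: "0 \<le> Bk k U (\<lambda>y. p m y - p N y) (\<lambda>y. p m y - p N y)" by (rule Bk_nonneg[OF k U])
    have q0: "0 \<le> Bk k U (p m) (p m)" by (rule Bk_nonneg[OF k U])
    have "Bk k U (p m) (p m) < e"
      by (rule real_final[OF q0 split t1 d0 d _ e]) (use t2 M m in auto)
    then show "norm (Bk k (S m) (p m) (p m) - 0) < e" using Q q0 by simp
  qed
qed


lemma conv:
  assumes k: "pos_def_kernel \<Omega> k" and s: "represents \<Omega> k s f"
    and t: "represents \<Omega> k t (combo_fun k (V,d))" and V: "finite V" "V \<subseteq> \<Omega>"
  shows "(\<lambda>m. pre_inner k (s m) (t m)) \<longlonglongrightarrow> (\<Sum>z\<in>V. d z * f z)"
proof -
  define e where "e = (V, d)"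
  define g where "g = combo_fun k e"
  have sfin: "\<And>m. finite (fst (s m))" "\<And>m. fst (s m) \<subseteq> \<Omega>"
    and sc: "\<And>\<epsilon>. \<epsilon> > 0 \<Longrightarrow> \<exists>N. \<forall>m\<ge>N. \<forall>n\<ge>N. pre_dist2 k (s m) (s n) < \<epsilon>"
    and spw: "\<And>x. x \<in> \<Omega> \<Longrightarrow> (\<lambda>n. combo_fun k (s n) x) \<longlonglongrightarrow> f x"
    using s unfolding represents_def by blast+
  have tfin: "\<And>m. finite (fst (t m))" "\<And>m. fst (t m) \<subseteq> \<Omega>"
    and tc: "\<And>\<epsilon>. \<epsilon> > 0 \<Longrightarrow> \<exists>N. \<forall>m\<ge>N. \<forall>n\<ge>N. pre_dist2 k (t m) (t n) < \<epsilon>"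
    and tpw: "\<And>x. x \<in> \<Omega> \<Longrightarrow> (\<lambda>n. combo_fun k (t n) x) \<longlonglongrightarrow> g x"
    using t unfolding represents_def g_def e_def by blast+
  define ps where "ps m = cf (s m)" for m
  define pt where "pt m = cf (t m)" for m
  define r where "r = cf e"
  define W where "W m = fst (s m) \<union> fst (t m) \<union> V" for m
  have W: "\<And>m. finite (W m)" "\<And>m. W m \<subseteq> \<Omega>" using sfin tfin V unfolding W_def by auto
  define pD where "pD m = (\<lambda>y. pt m y - r y)" for m
  define SD where "SD m = fst (t m) \<union> V" for m
  have SD: "\<And>m. finite (SD m)" "\<And>m. SD m \<subseteq> \<Omega>" using tfin V unfolding SD_def by auto
  have pDout: "\<And>m y. y \<notin> SD m \<Longrightarrow> pD m y = 0"
    unfolding pD_def pt_def r_def SD_def e_def by (auto simp: cf_def)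
  have dec: "pre_inner k (s m) (t m) = Bk k (W m) (ps m) r + Bk k (W m) (ps m) (pD m)" for m
  proof -
    have "pre_inner k (s m) (t m) = Bk k (W m) (ps m) (pt m)"
      unfolding ps_def pt_def using W(1)[of m] by (intro pre_inner_Bk) (auto simp: W_def)
    then show ?thesis by (simp add: pD_def Bk_diff_right)
  qed
  have first: "Bk k (W m) (ps m) r = (\<Sum>z\<in>V. d z * combo_fun k (s m) z)" for m
  proof -
    have "Bk k (W m) (ps m) r = (\<Sum>z\<in>W m. r z * (\<Sum>y\<in>W m. ps m y * k z y))"
      by (rule Bk_pair[OF k W(2)])
    also have "\<dots> = (\<Sum>z\<in>W m. r z * combo_fun k (s m) z)"
      unfolding ps_def using W by (subst combo_fun_U[of "W m"]) (auto simp: W_def)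
    also have "\<dots> = (\<Sum>z\<in>V. r z * combo_fun k (s m) z)"
      using W by (intro sum_supp) (auto simp: W_def r_def e_def cf_def)
    also have "\<dots> = (\<Sum>z\<in>V. d z * combo_fun k (s m) z)"
      by (intro sum.cong refl) (auto simp: r_def e_def cf_def)
    finally show ?thesis .
  qed
  have lim1: "(\<lambda>m. Bk k (W m) (ps m) r) \<longlonglongrightarrow> (\<Sum>z\<in>V. d z * f z)"
    unfolding first using V by (intro tendsto_intros spw) auto
  have DD: "(\<lambda>m. Bk k (SD m) (pD m) (pD m)) \<longlonglongrightarrow> 0"
  proof (rule hard[OF k SD pDout])
    fix \<epsilon> :: real assume "\<epsilon> > 0"
    from tc[OF this] obtain N where N: "\<forall>m\<ge>N. \<forall>n\<ge>N. pre_dist2 k (t m) (t n) < \<epsilon>" by blast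
    show "\<exists>N. \<forall>m\<ge>N. \<forall>l\<ge>N. Bk k (SD m \<union> SD l) (\<lambda>y. pD m y - pD l y) (\<lambda>y. pD m y - pD l y) < \<epsilon>"
    proof (intro exI allI impI)
      fix m l assume ml: "N \<le> m" "N \<le> l"
      have "(\<lambda>y. pD m y - pD l y) = (\<lambda>y. cf (t m) y - cf (t l) y)"
        unfolding pD_def pt_def by auto
      moreover have "pre_dist2 k (t m) (t l) = Bk k (SD m \<union> SD l) (\<lambda>y. cf (t m) y - cf (t l) y) (\<lambda>y. cf (t m) y - cf (t l) y)"
        using SD by (intro pre_dist2_Bk[OF k]) (auto simp: SD_def)
      ultimately show "Bk k (SD m \<union> SD l) (\<lambda>y. pD m y - pD l y) (\<lambda>y. pD m y - pD l y) < \<epsilon>"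
        using N ml by metis
    qed
  next
    fix z assume z: "z \<in> \<Omega>"
    have eq: "(\<Sum>y\<in>SD m. pD m y * k z y) = combo_fun k (t m) z - g z" for m
      unfolding pD_def g_def pt_def r_def left_diff_distrib sum_subtractf
      using SD by (subst (1 2) combo_fun_U[of "SD m"]) (auto simp: SD_def e_def)
    show "(\<lambda>m. \<Sum>y\<in>SD m. pD m y * k z y) \<longlonglongrightarrow> 0"
      unfolding eq using tendsto_diff[OF tpw[OF z] tendsto_const[of "g z"]] by simp
  qed
  obtain N where N: "\<forall>m\<ge>N. \<forall>n\<ge>N. pre_dist2 k (s m) (s n) < 1" using sc[of 1] by auto
  define C where "C = 2 * pre_inner k (s N) (s N) + 2"
  have bound: "Bk k (W m) (ps m) (ps m) \<le> C" if m: "m \<ge> N" for m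
  proof -
    define U where "U = fst (s m) \<union> fst (s N)"
    have U: "finite U" "U \<subseteq> \<Omega>" using sfin unfolding U_def by auto
    have "Bk k (W m) (ps m) (ps m) = Bk k (fst (s m)) (ps m) (ps m)"
      using W by (intro Bk_supp) (auto simp: W_def ps_def cf_def)
    also have "\<dots> = Bk k U (ps m) (ps m)"
      using U by (intro Bk_supp[symmetric]) (auto simp: U_def ps_def cf_def)
    also have "\<dots> \<le> 2 * Bk k U (ps N) (ps N) + 2 * Bk k U (\<lambda>y. ps m y - ps N y) (\<lambda>y. ps m y - ps N y)"
      by (rule Bk_2bound[OF k U])
    also have "Bk k U (ps N) (ps N) = pre_inner k (s N) (s N)"
      unfolding ps_def using U by (intro pre_inner_Bk[symmetric]) (auto simp: U_def)
    also have "Bk k U (\<lambda>y. ps m y - ps N y) (\<lambda>y. ps m y - ps N y) = pre_dist2 k (s m) (s N)"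
      unfolding ps_def using U by (intro pre_dist2_Bk[OF k, symmetric]) (auto simp: U_def)
    finally show ?thesis using N m unfolding C_def by force
  qed
  have C0: "C \<ge> 0" using bound[of N] Bk_nonneg[OF k W(1,2), of N "ps N"] by simp
  have lim2: "(\<lambda>m. Bk k (W m) (ps m) (pD m)) \<longlonglongrightarrow> 0"
  proof (rule Lim_null_comparison)
    show "(\<lambda>m. sqrt (C * Bk k (SD m) (pD m) (pD m))) \<longlonglongrightarrow> 0"
      using tendsto_real_sqrt[OF tendsto_mult_right_zero[OF DD, of C]] by simp
    show "\<forall>\<^sub>F m in sequentially. norm (Bk k (W m) (ps m) (pD m)) \<le> sqrt (C * Bk k (SD m) (pD m) (pD m))"
    proof (rule eventually_sequentiallyI[of N])
      fix m assume m: "N \<le> m"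
      have eqD: "Bk k (W m) (pD m) (pD m) = Bk k (SD m) (pD m) (pD m)"
        using W pDout by (intro Bk_supp) (auto simp: W_def SD_def)
      have "(Bk k (W m) (ps m) (pD m))^2 \<le> Bk k (W m) (pD m) (pD m) * Bk k (W m) (ps m) (ps m)"
        by (rule Bk_CS[OF k W(1,2)])
      also have "\<dots> \<le> Bk k (SD m) (pD m) (pD m) * C"
        unfolding eqD using bound[OF m] Bk_nonneg[OF k SD(1,2), of m "pD m"]
        by (intro mult_left_mono) auto
      finally have "(Bk k (W m) (ps m) (pD m))^2 \<le> C * Bk k (SD m) (pD m) (pD m)" by (simp add: mult_ac)
      then have "sqrt ((Bk k (W m) (ps m) (pD m))^2) \<le> sqrt (C * Bk k (SD m) (pD m) (pD m))"
        by (rule real_sqrt_le_mono)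
      then show "norm (Bk k (W m) (ps m) (pD m)) \<le> sqrt (C * Bk k (SD m) (pD m) (pD m))" by simp
    qed
  qed
  show ?thesis unfolding dec using tendsto_add[OF lim1 lim2] by simp
qed

lemma native_inner_combo:
  assumes k: "pos_def_kernel \<Omega> k" and f: "f \<in> native_space \<Omega> k" and V: "finite V" "V \<subseteq> \<Omega>"
  shows "native_inner \<Omega> k f (combo_fun k (V,d)) = (\<Sum>z\<in>V. d z * f z)"
  unfolding native_inner_def
proof (rule the_equality)
  show "\<forall>s t. represents \<Omega> k s f \<and> represents \<Omega> k t (combo_fun k (V, d)) \<longrightarrow>
      (\<lambda>n. pre_inner k (s n) (t n)) \<longlonglongrightarrow> (\<Sum>z\<in>V. d z * f z)"
    using conv[OF k _ _ V] by blast
next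
  fix r assume r: "\<forall>s t. represents \<Omega> k s f \<and> represents \<Omega> k t (combo_fun k (V, d)) \<longrightarrow>
      (\<lambda>n. pre_inner k (s n) (t n)) \<longlonglongrightarrow> r"
  obtain s where s: "represents \<Omega> k s f" using f unfolding native_space_def by blast
  have t: "represents \<Omega> k (\<lambda>_. (V,d)) (combo_fun k (V, d))"
    unfolding represents_def pre_dist2_def using V by auto
  have "(\<lambda>n. pre_inner k (s n) (V,d)) \<longlonglongrightarrow> r" using r s t by blast
  then show "r = (\<Sum>z\<in>V. d z * f z)"
    using LIMSEQ_unique conv[OF k s t V] by blast
qed



lemma Klam_pd:
  assumes K: "pos_def_kernel \<Omega> K" and lam: "lam \<ge> 0"
  shows "pos_def_kernel \<Omega> (Klam K lam)"
  unfolding pos_def_kernel_def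
proof (intro conjI allI impI ballI)
  fix x y assume "x \<in> \<Omega>" "y \<in> \<Omega>"
  then show "Klam K lam x y = Klam K lam y x" using pdk_sym[OF K] by (auto simp: Klam_def)
next
  fix m :: nat and p :: "nat \<Rightarrow> 'a" and c :: "nat \<Rightarrow> real"
  assume a: "inj_on p {..<m} \<and> p ` {..<m} \<subseteq> \<Omega>"
  have "(\<Sum>i<m. \<Sum>j<m. c i * c j * Klam K lam (p i) (p j))
      = (\<Sum>i<m. \<Sum>j<m. c i * c j * K (p i) (p j)) + (\<Sum>i<m. \<Sum>j<m. if j = i then c i * c j * lam else 0)"
    unfolding sum.distrib[symmetric]
  proof (intro sum.cong refl)
    fix i j assume ij: "i \<in> {..<m}" "j \<in> {..<m}"
    have "p i = p j \<longleftrightarrow> i = j" using a ij by (auto dest: inj_onD)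
    then show "c i * c j * Klam K lam (p i) (p j) = c i * c j * K (p i) (p j) + (if j = i then c i * c j * lam else 0)"
      by (auto simp: Klam_def algebra_simps)
  qed
  also have "\<dots> = (\<Sum>i<m. \<Sum>j<m. c i * c j * K (p i) (p j)) + (\<Sum>i<m. c i * c i * lam)"
    by simp
  also have "\<dots> \<ge> 0"
  proof -
    have "0 \<le> (\<Sum>i<m. \<Sum>j<m. c i * c j * K (p i) (p j))" using K a unfolding pos_def_kernel_def by blast
    moreover have "0 \<le> (\<Sum>i<m. c i * c i * lam)" using lam by (intro sum_nonneg) simp
    ultimately show ?thesis by linarith
  qed
  finally show "0 \<le> (\<Sum>i<m. \<Sum>j<m. c i * c j * Klam K lam (p i) (p j))" .
qed

lemma A_inj:
  fixes m :: nat and x :: "nat \<Rightarrow> 'a" and w :: "nat \<Rightarrow> real"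
  assumes K: "pos_def_kernel \<Omega> K" and lam: "lam > 0" and xin: "x ` {1..m} \<subseteq> \<Omega>"
    and xinj: "inj_on x {1..m}"
    and w: "\<forall>i\<in>{1..m}. (\<Sum>j=1..m. (K (x i) (x j) + (if i = j then lam else 0)) * w j) = 0"
  shows "\<forall>i\<in>{1..m}. w i = 0"
proof -
  have row: "(\<Sum>j=1..m. (K (x i) (x j) + (if i = j then lam else 0)) * w j)
      = (\<Sum>j=1..m. K (x i) (x j) * w j) + lam * w i" if i: "i \<in> {1..m}" for i
  proof -
    have "(\<Sum>j=1..m. (K (x i) (x j) + (if i = j then lam else 0)) * w j)
      = (\<Sum>j=1..m. K (x i) (x j) * w j) + (\<Sum>j=1..m. if i = j then lam * w j else 0)"
      unfolding sum.distrib[symmetric] by (intro sum.cong refl) (auto simp: algebra_simps)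
    also have "(\<Sum>j=1..m. if i = j then lam * w j else 0) = lam * w i" using i by (simp add: sum.delta)
    finally show ?thesis .
  qed
  have "0 = (\<Sum>i=1..m. w i * (\<Sum>j=1..m. (K (x i) (x j) + (if i = j then lam else 0)) * w j))"
    using w by simp
  also have "\<dots> = (\<Sum>i=1..m. \<Sum>j=1..m. w i * w j * K (x i) (x j)) + lam * (\<Sum>i=1..m. (w i)^2)"
  proof -
    have "(\<Sum>i=1..m. w i * (\<Sum>j=1..m. (K (x i) (x j) + (if i = j then lam else 0)) * w j))
      = (\<Sum>i=1..m. w i * ((\<Sum>j=1..m. K (x i) (x j) * w j) + lam * w i))"
      by (rule sum.cong[OF refl]) (simp only: row)
    also have "\<dots> = (\<Sum>i=1..m. w i * (\<Sum>j=1..m. K (x i) (x j) * w j)) + (\<Sum>i=1..m. lam * (w i)^2)"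
      unfolding distrib_left sum.distrib
      by (intro arg_cong2[where f="(+)"] refl sum.cong) (simp add: power2_eq_square)
    also have "(\<Sum>i=1..m. w i * (\<Sum>j=1..m. K (x i) (x j) * w j)) = (\<Sum>i=1..m. \<Sum>j=1..m. w i * w j * K (x i) (x j))"
      unfolding sum_distrib_left by (intro sum.cong refl) (simp only: mult.commute mult.left_commute)
    also have "(\<Sum>i=1..m. lam * (w i)^2) = lam * (\<Sum>i=1..m. (w i)^2)"
      by (simp only: sum_distrib_left)
    finally show ?thesis .
  qed
  finally have eq: "0 = (\<Sum>i=1..m. \<Sum>j=1..m. w i * w j * K (x i) (x j)) + lam * (\<Sum>i=1..m. (w i)^2)" .
  have psd: "0 \<le> (\<Sum>i=1..m. \<Sum>j=1..m. w i * w j * K (x i) (x j))"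
  proof -
    have inj: "inj_on (\<lambda>i. x (Suc i)) {..<m}"
    proof (rule inj_onI)
      fix a b assume ab: "a \<in> {..<m}" "b \<in> {..<m}" "x (Suc a) = x (Suc b)"
      have "Suc a \<in> {1..m}" "Suc b \<in> {1..m}" using ab by auto
      then have "Suc a = Suc b" using inj_onD[OF xinj ab(3)] by blast
      then show "a = b" by simp
    qed
    have im: "(\<lambda>i. x (Suc i)) ` {..<m} \<subseteq> \<Omega>"
    proof (rule image_subsetI)
      fix i assume "i \<in> {..<m}"
      then have "Suc i \<in> {1..m}" by auto
      then show "x (Suc i) \<in> \<Omega>" using xin by blast
    qed
    have "0 \<le> (\<Sum>i<m. \<Sum>j<m. w (Suc i) * w (Suc j) * K (x (Suc i)) (x (Suc j)))"
    proof -
      have H: "\<forall>(m::nat) (p::nat \<Rightarrow> 'a) (c::nat \<Rightarrow> real).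
        inj_on p {..<m} \<and> p ` {..<m} \<subseteq> \<Omega> \<longrightarrow>
        0 \<le> (\<Sum>i<m. \<Sum>j<m. c i * c j * K (p i) (p j))"
        using K unfolding pos_def_kernel_def by (rule conjunct2)
      show ?thesis
        using mp[OF H[THEN spec[of _ m], THEN spec[of _ "\<lambda>i. x (Suc i)"], THEN spec[of _ "\<lambda>i. w (Suc i)"]]]
          inj im by simp
    qed
    also have "\<dots> = (\<Sum>i=1..m. \<Sum>j=1..m. w i * w j * K (x i) (x j))"
      by (simp add: sum.atLeast1_atMost_eq)
    finally show ?thesis .
  qed
  have s0: "0 \<le> (\<Sum>i=1..m. (w i)^2)" by (rule sum_nonneg) (rule zero_le_power2)
  have neg: "lam * (\<Sum>i=1..m. (w i)^2) \<le> 0" using eq psd by linarith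
  have s1: "(\<Sum>i=1..m. (w i)^2) = 0"
  proof (rule ccontr)
    assume "(\<Sum>i=1..m. (w i)^2) \<noteq> 0"
    then have "(\<Sum>i=1..m. (w i)^2) > 0" using s0 by linarith
    then have "lam * (\<Sum>i=1..m. (w i)^2) > 0" by (rule mult_pos_pos[OF lam])
    then show False using neg by linarith
  qed
  have "\<forall>i\<in>{1..m}. (w i)^2 = 0"
    using sum_nonneg_eq_0_iff[of "{1..m}" "\<lambda>i. (w i)^2"] s1 by simp
  then show ?thesis by simp
qed


lemma swap3:
  fixes a c :: "nat \<Rightarrow> real" and b :: "nat \<Rightarrow> nat \<Rightarrow> real"
  shows "(\<Sum>j\<in>J. a j * (\<Sum>k\<in>I. b j k * c k)) = (\<Sum>k\<in>I. c k * (\<Sum>j\<in>J. a j * b j k))"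
  unfolding sum_distrib_left by (subst sum.swap) (simp add: mult_ac)

lemma reg_formula:
  fixes m :: nat and x :: "nat \<Rightarrow> 'a" and L \<beta> :: "nat \<Rightarrow> nat \<Rightarrow> real" and f :: "'a \<Rightarrow> real"
    and K :: "'a \<Rightarrow> 'a \<Rightarrow> real"
  assumes AI: "\<And>w. \<forall>i\<in>{1..m}. (\<Sum>j=1..m. (K (x i) (x j) + (if i = j then lam else 0)) * w j) = 0
      \<Longrightarrow> \<forall>i\<in>{1..m}. w i = 0"
    and chol: "\<forall>i\<in>{1..m}. \<forall>j\<in>{1..m}.
                 (\<Sum>l=1..m. L i l * L j l) = K (x i) (x j) + (if i = j then lam else 0)"
    and beta: "\<forall>i\<in>{1..m}. \<forall>j\<in>{1..m}.
                 (\<Sum>l=1..m. L l i * \<beta> l j) = (if i = j then 1 else 0)"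
  shows "reg_interp K lam x m f z
     = (\<Sum>k=1..m. (\<Sum>j=1..m. \<beta> j k * f (x j)) * (\<Sum>i=1..m. \<beta> i k * K z (x i)))"
proof -
  define I where "I = {1..m}"
  define A where "A i j = K (x i) (x j) + (if i = j then lam else 0)" for i j
  have AI': "\<And>w. \<forall>i\<in>I. (\<Sum>j\<in>I. A i j * w j) = 0 \<Longrightarrow> \<forall>i\<in>I. w i = 0"
    using AI unfolding I_def A_def by blast
  have chol': "\<And>i j. i \<in> I \<Longrightarrow> j \<in> I \<Longrightarrow> A i j = (\<Sum>l\<in>I. L i l * L j l)"
    using chol unfolding I_def A_def by simp
  have beta': "\<And>i j. i \<in> I \<Longrightarrow> j \<in> I \<Longrightarrow> (\<Sum>l\<in>I. L l i * \<beta> l j) = (if i = j then 1 else 0)"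
    using beta unfolding I_def by simp
  have finI: "finite I" unfolding I_def by simp
  have LTI: "\<forall>l\<in>I. u l = 0" if u: "\<forall>p\<in>I. (\<Sum>l\<in>I. L l p * u l) = 0" for u
  proof (rule AI', intro ballI)
    fix i assume i: "i \<in> I"
    have "(\<Sum>j\<in>I. A i j * u j) = (\<Sum>j\<in>I. u j * (\<Sum>l\<in>I. L j l * L i l))"
      using i by (intro sum.cong refl) (simp add: chol' mult_ac)
    also have "\<dots> = (\<Sum>l\<in>I. L i l * (\<Sum>j\<in>I. u j * L j l))" by (rule swap3)
    also have "\<dots> = 0" using u by (simp add: mult_ac)
    finally show "(\<Sum>j\<in>I. A i j * u j) = 0" .
  qed
  have RI: "(\<Sum>k\<in>I. \<beta> j k * L i k) = (if i = j then 1 else 0)" if ij: "i \<in> I" "j \<in> I" for i j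
  proof -
    define u where "u j = (\<Sum>k\<in>I. \<beta> j k * L i k) - (if j = i then 1 else 0)" for j
    have "\<forall>p\<in>I. (\<Sum>l\<in>I. L l p * u l) = 0"
    proof
      fix p assume p: "p \<in> I"
      have "(\<Sum>l\<in>I. L l p * u l) = (\<Sum>l\<in>I. L l p * (\<Sum>k\<in>I. \<beta> l k * L i k)) - (\<Sum>l\<in>I. L l p * (if l = i then 1 else 0))"
        unfolding u_def right_diff_distrib sum_subtractf ..
      also have "(\<Sum>l\<in>I. L l p * (if l = i then 1 else 0)) = L i p"
      proof -
        have "(\<Sum>l\<in>I. L l p * (if l = i then 1 else 0)) = (\<Sum>l\<in>I. if l = i then L l p else 0)"
          by (intro sum.cong refl) auto
        also have "\<dots> = L i p" using ij finI by (simp add: sum.delta)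
        finally show ?thesis .
      qed
      also have "(\<Sum>l\<in>I. L l p * (\<Sum>k\<in>I. \<beta> l k * L i k)) = (\<Sum>k\<in>I. L i k * (\<Sum>l\<in>I. L l p * \<beta> l k))"
        by (rule swap3)
      also have "\<dots> = (\<Sum>k\<in>I. if p = k then L i k else 0)"
        using p by (intro sum.cong refl) (simp add: beta')
      also have "\<dots> = L i p" using p finI by (simp add: sum.delta)
      finally show "(\<Sum>l\<in>I. L l p * u l) = 0" by simp
    qed
    then have "\<forall>l\<in>I. u l = 0" by (rule LTI)
    then show ?thesis using ij unfolding u_def by auto
  qed
  have AB: "(\<Sum>l\<in>I. A i l * \<beta> l k) = L i k" if ik: "i \<in> I" "k \<in> I" for i k
  proof -
    have "(\<Sum>l\<in>I. A i l * \<beta> l k) = (\<Sum>l\<in>I. \<beta> l k * (\<Sum>p\<in>I. L l p * L i p))"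
      using ik by (intro sum.cong refl) (simp add: chol' mult_ac)
    also have "\<dots> = (\<Sum>p\<in>I. L i p * (\<Sum>l\<in>I. \<beta> l k * L l p))" by (rule swap3)
    also have "\<dots> = (\<Sum>p\<in>I. if p = k then L i p else 0)"
    proof (intro sum.cong refl)
      fix p assume p: "p \<in> I"
      have "(\<Sum>l\<in>I. \<beta> l k * L l p) = (\<Sum>l\<in>I. L l p * \<beta> l k)" by (simp add: mult.commute)
      also have "\<dots> = (if p = k then 1 else 0)" using beta'[OF p ik(2)] .
      finally show "L i p * (\<Sum>l\<in>I. \<beta> l k * L l p) = (if p = k then L i p else 0)" by simp
    qed
    also have "\<dots> = L i k" using ik finI by (simp add: sum.delta')
    finally show ?thesis .
  qed
  define \<gamma> where "\<gamma> k = (\<Sum>j\<in>I. \<beta> j k * f (x j))" for k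
  define \<alpha> where "\<alpha> i = (if i \<in> I then (\<Sum>k\<in>I. \<beta> i k * \<gamma> k) else 0)" for i
  have solves: "(\<Sum>l\<in>I. A i l * \<alpha> l) = f (x i)" if i: "i \<in> I" for i
  proof -
    have "(\<Sum>l\<in>I. A i l * \<alpha> l) = (\<Sum>l\<in>I. A i l * (\<Sum>k\<in>I. \<beta> l k * \<gamma> k))"
      by (intro sum.cong refl) (simp add: \<alpha>_def)
    also have "\<dots> = (\<Sum>k\<in>I. \<gamma> k * (\<Sum>l\<in>I. A i l * \<beta> l k))" by (rule swap3)
    also have "\<dots> = (\<Sum>k\<in>I. \<gamma> k * L i k)" using i by (intro sum.cong refl) (simp add: AB)
    also have "\<dots> = (\<Sum>k\<in>I. L i k * (\<Sum>j\<in>I. \<beta> j k * f (x j)))" by (simp add: \<gamma>_def mult_ac)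
    also have "\<dots> = (\<Sum>j\<in>I. f (x j) * (\<Sum>k\<in>I. L i k * \<beta> j k))" by (rule swap3)
    also have "\<dots> = (\<Sum>j\<in>I. if i = j then f (x j) else 0)"
    proof (intro sum.cong refl)
      fix j assume j: "j \<in> I"
      have "(\<Sum>k\<in>I. L i k * \<beta> j k) = (\<Sum>k\<in>I. \<beta> j k * L i k)" by (simp add: mult.commute)
      also have "\<dots> = (if i = j then 1 else 0)" using RI[OF i j] .
      finally show "f (x j) * (\<Sum>k\<in>I. L i k * \<beta> j k) = (if i = j then f (x j) else 0)" by simp
    qed
    also have "\<dots> = f (x i)" using i finI by (simp add: sum.delta)
    finally show ?thesis .
  qed
  have the_alpha: "(THE \<alpha>::nat \<Rightarrow> real. (\<forall>i. i \<notin> {1..m} \<longrightarrow> \<alpha> i = 0) \<and>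
                  (\<forall>i\<in>{1..m}. (\<Sum>j=1..m. (K (x i) (x j) + (if i = j then lam else 0)) * \<alpha> j) = f (x i))) = \<alpha>"
  proof (rule the_equality)
    show "(\<forall>i. i \<notin> {1..m} \<longrightarrow> \<alpha> i = 0) \<and>
        (\<forall>i\<in>{1..m}. (\<Sum>j=1..m. (K (x i) (x j) + (if i = j then lam else 0)) * \<alpha> j) = f (x i))"
      using solves unfolding I_def A_def by (auto simp: \<alpha>_def I_def)
  next
    fix \<alpha>' :: "nat \<Rightarrow> real"
    assume a: "(\<forall>i. i \<notin> {1..m} \<longrightarrow> \<alpha>' i = 0) \<and>
        (\<forall>i\<in>{1..m}. (\<Sum>j=1..m. (K (x i) (x j) + (if i = j then lam else 0)) * \<alpha>' j) = f (x i))"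
    have "\<forall>i\<in>I. (\<Sum>j\<in>I. A i j * (\<alpha>' j - \<alpha> j)) = 0"
    proof
      fix i assume i: "i \<in> I"
      have "(\<Sum>j\<in>I. A i j * (\<alpha>' j - \<alpha> j)) = (\<Sum>j\<in>I. A i j * \<alpha>' j) - (\<Sum>j\<in>I. A i j * \<alpha> j)"
        by (simp add: right_diff_distrib sum_subtractf)
      also have "\<dots> = 0" using a i solves[OF i] unfolding I_def A_def by simp
      finally show "(\<Sum>j\<in>I. A i j * (\<alpha>' j - \<alpha> j)) = 0" .
    qed
    then have "\<forall>i\<in>I. \<alpha>' i - \<alpha> i = 0" by (rule AI')
    then show "\<alpha>' = \<alpha>" using a by (auto simp: \<alpha>_def I_def fun_eq_iff)
  qed
  have "reg_interp K lam x m f z = (\<Sum>j\<in>I. \<alpha> j * K z (x j))"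
    unfolding reg_interp_def the_alpha Let_def I_def ..
  also have "\<dots> = (\<Sum>j\<in>I. K z (x j) * (\<Sum>k\<in>I. \<beta> j k * \<gamma> k))"
    by (intro sum.cong refl) (simp add: \<alpha>_def mult_ac)
  also have "\<dots> = (\<Sum>k\<in>I. \<gamma> k * (\<Sum>j\<in>I. K z (x j) * \<beta> j k))" by (rule swap3)
  also have "\<dots> = (\<Sum>k=1..m. (\<Sum>j=1..m. \<beta> j k * f (x j)) * (\<Sum>i=1..m. \<beta> i k * K z (x i)))"
    unfolding \<gamma>_def I_def by (simp add: mult_ac)
  finally show ?thesis .
qed


theorem proposition2p2:
  fixes \<Omega> :: "(real ^ 'd) set" and K :: "real ^ 'd \<Rightarrow> real ^ 'd \<Rightarrow> real"
    and lam :: real and n :: nat and x :: "nat \<Rightarrow> real ^ 'd"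
    and L \<beta> :: "nat \<Rightarrow> nat \<Rightarrow> real" and f :: "real ^ 'd \<Rightarrow> real"
    and v v\<^sub>l :: "nat \<Rightarrow> real ^ 'd \<Rightarrow> real"
  assumes K: "pos_def_kernel \<Omega> K"
    and lam: "lam > 0"
    and n: "n \<ge> 1"
    and xin: "x ` {1..n} \<subseteq> \<Omega>"
    and xdist: "inj_on x {1..n}"
    and L_lower: "\<forall>i\<in>{1..n}. \<forall>j\<in>{1..n}. i < j \<longrightarrow> L i j = 0"
    and L_diag: "\<forall>i\<in>{1..n}. L i i > 0"
    and chol: "\<forall>i\<in>{1..n}. \<forall>j\<in>{1..n}.
                 (\<Sum>l=1..n. L i l * L j l) = K (x i) (x j) + (if i = j then lam else 0)"
    and beta: "\<forall>i\<in>{1..n}. \<forall>j\<in>{1..n}.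
                 (\<Sum>l=1..n. L l i * \<beta> l j) = (if i = j then 1 else 0)"
    and vl_def: "\<forall>k. v\<^sub>l k = (\<lambda>z. \<Sum>j=1..n. \<beta> j k * Klam K lam z (x j))"
    and v_def: "\<forall>k. v k = (\<lambda>z. \<Sum>j=1..n. \<beta> j k * K z (x j))"
    and f: "f \<in> native_space \<Omega> (Klam K lam)"
  shows "(\<forall>z\<in>\<Omega>. reg_interp K lam x n f z
            = (\<Sum>k=1..n. native_inner \<Omega> (Klam K lam) f (v\<^sub>l k) * v k z)
          \<and> reg_interp K lam x n f z
            = reg_interp K lam x (n - 1) f z + native_inner \<Omega> (Klam K lam) f (v\<^sub>l n) * v n z)
       \<and> (f \<in> native_space \<Omega> K \<longrightarrow>
            (\<forall>k\<in>{1..n}. native_inner \<Omega> K f (v k) = native_inner \<Omega> (Klam K lam) f (v\<^sub>l k))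
          \<and> (\<forall>z\<in>\<Omega>. reg_interp K lam x n f z = (\<Sum>k=1..n. native_inner \<Omega> K f (v k) * v k z)
              \<and> reg_interp K lam x n f z
                = reg_interp K lam x (n - 1) f z + native_inner \<Omega> K f (v n) * v n z))"
  proof -
  have pdl: "pos_def_kernel \<Omega> (Klam K lam)" using Klam_pd[OF K] lam by simp
  define \<gamma> where "\<gamma> k = (\<Sum>j=1..n. \<beta> j k * f (x j))" for k
  have invx: "\<And>j. j \<in> {1..n} \<Longrightarrow> inv_into {1..n} x (x j) = j" using inv_into_f_f[OF xdist] by blast
  have finV: "finite (x ` {1..n})" by simp
  have combo_eq: "(\<lambda>z. \<Sum>j=1..n. c j * kk z (x j)) = combo_fun kk (x ` {1..n}, \<lambda>y. c (inv_into {1..n} x y))"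
    for c :: "nat \<Rightarrow> real" and kk :: "real ^ 'd \<Rightarrow> real ^ 'd \<Rightarrow> real"
    unfolding combo_fun_def
  proof (rule ext)
    fix z
    show "(\<Sum>j=1..n. c j * kk z (x j)) = (\<Sum>y\<in>fst (x ` {1..n}, \<lambda>y. c (inv_into {1..n} x y)). snd (x ` {1..n}, \<lambda>y. c (inv_into {1..n} x y)) y * kk z y)"
      unfolding fst_conv snd_conv
      by (subst sum.reindex[OF xdist]) (rule sum.cong[OF refl], simp only: o_apply invx)
  qed
  have sum_eq: "(\<Sum>z\<in>x ` {1..n}. c (inv_into {1..n} x z) * g z) = (\<Sum>j=1..n. c j * g (x j))"
    for c :: "nat \<Rightarrow> real" and g :: "real ^ 'd \<Rightarrow> real"
    by (subst sum.reindex[OF xdist]) (rule sum.cong[OF refl], simp only: o_apply invx)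
  have ipl: "native_inner \<Omega> (Klam K lam) f (v\<^sub>l k) = \<gamma> k" for k
  proof -
    have "v\<^sub>l k = combo_fun (Klam K lam) (x ` {1..n}, \<lambda>y. \<beta> (inv_into {1..n} x y) k)"
      using vl_def combo_eq[of "\<lambda>j. \<beta> j k" "Klam K lam"] by simp
    then show ?thesis
      using native_inner_combo[OF pdl f finV xin] sum_eq[of "\<lambda>j. \<beta> j k" f] unfolding \<gamma>_def by simp
  qed
  have ip: "native_inner \<Omega> K f (v k) = \<gamma> k" if fK: "f \<in> native_space \<Omega> K" for k
  proof -
    have "v k = combo_fun K (x ` {1..n}, \<lambda>y. \<beta> (inv_into {1..n} x y) k)"
      using v_def combo_eq[of "\<lambda>j. \<beta> j k" K] by simp
    then show ?thesis
      using native_inner_combo[OF K fK finV xin] sum_eq[of "\<lambda>j. \<beta> j k" f] unfolding \<gamma>_def by simp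
  qed
  have AIm: "\<And>w. \<forall>i\<in>{1..m}. (\<Sum>j=1..m. (K (x i) (x j) + (if i = j then lam else 0)) * w j) = 0
      \<Longrightarrow> \<forall>i\<in>{1..m}. w i = 0" if m: "m \<le> n" for m
  proof -
    fix w :: "nat \<Rightarrow> real"
    assume w: "\<forall>i\<in>{1..m}. (\<Sum>j=1..m. (K (x i) (x j) + (if i = j then lam else 0)) * w j) = 0"
    have sub: "{1..m} \<subseteq> {1..n}" using m by auto
    show "\<forall>i\<in>{1..m}. w i = 0"
      by (rule A_inj[OF K lam _ inj_on_subset[OF xdist sub] w]) (use xin sub in auto)
  qed
  have vz: "v k z = (\<Sum>i=1..n. \<beta> i k * K z (x i))" for k z using v_def by simp
  have regn: "reg_interp K lam x n f z = (\<Sum>k=1..n. \<gamma> k * v k z)" for z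
    unfolding \<gamma>_def vz by (rule reg_formula[where m=n and K=K and x=x and lam=lam and L=L and \<beta>=\<beta>, OF AIm[OF order_refl] chol beta])
  obtain m where nm: "n = Suc m" using n by (cases n) auto
  have mI: "j \<in> {1..m} \<Longrightarrow> j \<in> {1..n}" for j using nm by auto
  have splitn: "(\<Sum>l=1..n. g l) = (\<Sum>l=1..m. g l) + g n" for g :: "nat \<Rightarrow> real"
    unfolding nm by simp
  have Lz: "L i n = 0" if "i \<in> {1..m}" for i using L_lower that nm by auto
  have bz: "\<beta> n j = 0" if j: "j \<in> {1..m}" for j
  proof -
    have "(\<Sum>l=1..n. L l n * \<beta> l j) = 0" using beta mI[OF j] n nm j by auto
    moreover have "(\<Sum>l=1..n. L l n * \<beta> l j) = L n n * \<beta> n j"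
      unfolding splitn using Lz by simp
    ultimately have "L n n * \<beta> n j = 0" by simp
    moreover have "L n n > 0" using L_diag n by auto
    ultimately show ?thesis by simp
  qed
  have cholm: "\<forall>i\<in>{1..m}. \<forall>j\<in>{1..m}.
                 (\<Sum>l=1..m. L i l * L j l) = K (x i) (x j) + (if i = j then lam else 0)"
  proof (intro ballI)
    fix i j assume ij: "i \<in> {1..m}" "j \<in> {1..m}"
    have "(\<Sum>l=1..m. L i l * L j l) = (\<Sum>l=1..n. L i l * L j l)"
      unfolding splitn using Lz[OF ij(1)] by simp
    then show "(\<Sum>l=1..m. L i l * L j l) = K (x i) (x j) + (if i = j then lam else 0)"
      using chol mI[OF ij(1)] mI[OF ij(2)] by simp
  qed
  have betam: "\<forall>i\<in>{1..m}. \<forall>j\<in>{1..m}.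
                 (\<Sum>l=1..m. L l i * \<beta> l j) = (if i = j then 1 else 0)"
  proof (intro ballI)
    fix i j assume ij: "i \<in> {1..m}" "j \<in> {1..m}"
    have "(\<Sum>l=1..m. L l i * \<beta> l j) = (\<Sum>l=1..n. L l i * \<beta> l j)"
      unfolding splitn using bz[OF ij(2)] by simp
    then show "(\<Sum>l=1..m. L l i * \<beta> l j) = (if i = j then 1 else 0)"
      using beta mI[OF ij(1)] mI[OF ij(2)] by simp
  qed
  have regm: "reg_interp K lam x (n - 1) f z = (\<Sum>k=1..m. \<gamma> k * v k z)" for z
  proof -
    have "reg_interp K lam x (n - 1) f z
        = (\<Sum>k=1..m. (\<Sum>j=1..m. \<beta> j k * f (x j)) * (\<Sum>i=1..m. \<beta> i k * K z (x i)))"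
      unfolding nm diff_Suc_1 by (rule reg_formula[where m=m and K=K and x=x and lam=lam and L=L and \<beta>=\<beta>, OF AIm cholm betam]) (simp add: nm)
    also have "\<dots> = (\<Sum>k=1..m. \<gamma> k * v k z)"
    proof (intro sum.cong refl)
      fix k assume k: "k \<in> {1..m}"
      show "(\<Sum>j=1..m. \<beta> j k * f (x j)) * (\<Sum>i=1..m. \<beta> i k * K z (x i)) = \<gamma> k * v k z"
        unfolding \<gamma>_def vz splitn using bz[OF k] by simp
    qed
    finally show ?thesis .
  qed
  have p1a: "reg_interp K lam x n f z = (\<Sum>k=1..n. \<gamma> k * v k z)" for z by (rule regn)
  have p1b: "reg_interp K lam x n f z = reg_interp K lam x (n - 1) f z + \<gamma> n * v n z" for z
    unfolding regn regm splitn[of "\<lambda>k. \<gamma> k * v k z"] ..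
  show ?thesis
  proof (intro conjI ballI impI)
    fix z
    show "reg_interp K lam x n f z = (\<Sum>k=1..n. native_inner \<Omega> (Klam K lam) f (v\<^sub>l k) * v k z)"
      unfolding ipl by (rule p1a)
    show "reg_interp K lam x n f z
        = reg_interp K lam x (n - 1) f z + native_inner \<Omega> (Klam K lam) f (v\<^sub>l n) * v n z"
      unfolding ipl by (rule p1b)
  next
    fix k assume fK: "f \<in> native_space \<Omega> K"
    show "native_inner \<Omega> K f (v k) = native_inner \<Omega> (Klam K lam) f (v\<^sub>l k)"
      unfolding ipl ip[OF fK] ..
  next
    fix z assume fK: "f \<in> native_space \<Omega> K"
    show "reg_interp K lam x n f z = (\<Sum>k=1..n. native_inner \<Omega> K f (v k) * v k z)"
      unfolding ip[OF fK] by (rule p1a)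
    show "reg_interp K lam x n f z
        = reg_interp K lam x (n - 1) f z + native_inner \<Omega> K f (v n) * v n z"
      unfolding ip[OF fK] by (rule p1b)
  qed
qed


end
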